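(* Let a group $G$ act properly and isometrically on a proper geodesic metric space $X$ with basepoint $o$, let $f\in G$ be a contracting element, and let $C>0$ be such that every geodesic segment with both endpoints in $\mathrm{Ax}(f)$ is $C$-contracting. Given $r,M>0$, there exist $\hat r=\hat r(r,C,M)$ and $L_1=L_1(C,M)>0$ with the following property. Let $h\in E(f)$ satisfy $d(o,ho)>L_1$, let $g\in G$ and $\theta\in(0,1]$, and let $\alpha,\beta$ be two geodesics from $B(o,M)$ to $B(go,M)$. If $\alpha$ contains a $\theta$-segment with an $(r,h)$-barrier, then $\beta$ contains some $\theta$-segment with an $(\hat r,h)$-barrier.
   Context: A closed $U$ is $C$-contracting if every geodesic $\gamma$ with $d(\gamma,U)\ge C$ has $\mathrm{diam}(\pi_U(\gamma))\le C$ ($\pi_U$ nearest-point projection). An infinite-order $f$ is contracting if $n\mapsto f^no$ is a quasi-isometric embedding with contracting image. $E(f)=\{g\in G:\exists n>0,\ gf^ng^{-1}=f^{\pm n}\}$ is the maximal elementary subgroup containing $f$, and $\mathrm{Ax}(f)=E(f)\cdot o$. A $\theta$-segment of a geodesic $\gamma$ is a closed connected subsegment of length $\theta\ell(\gamma)$. A segment $\sigma$ has an $(r,h)$-barrier if there is $t\in G$ with $d(to,\sigma)\le r$ and $d(tho,\sigma)\le r$. *)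

theory Defs
  imports "HOL-Analysis.Analysis" "HOL-Algebra.Algebra"
begin

definition proper_metric :: "('x::metric_space) itself \<Rightarrow> bool" where
  "proper_metric _ \<longleftrightarrow> (\<forall>(x::'x) r. compact (cball x r))"

definition geodesic_seg :: "(real \<Rightarrow> 'x::metric_space) \<Rightarrow> 'x \<Rightarrow> 'x \<Rightarrow> real \<Rightarrow> bool" where
  "geodesic_seg \<gamma> a b L \<longleftrightarrow> L \<ge> 0 \<and> \<gamma> 0 = a \<and> \<gamma> L = b \<and>
     (\<forall>s\<in>{0..L}. \<forall>t\<in>{0..L}. dist (\<gamma> s) (\<gamma> t) = \<bar>s - t\<bar>)"

definition geodesic_space :: "('x::metric_space) itself \<Rightarrow> bool" where
  "geodesic_space _ \<longleftrightarrow> (\<forall>(a::'x) b. \<exists>\<gamma>. geodesic_seg \<gamma> a b (dist a b))"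

definition proj_pt :: "'x::metric_space set \<Rightarrow> 'x \<Rightarrow> 'x set" where
  "proj_pt U x = {p \<in> U. dist x p = infdist x U}"

definition proj_set :: "'x::metric_space set \<Rightarrow> 'x set \<Rightarrow> 'x set" where
  "proj_set U A = (\<Union>x\<in>A. proj_pt U x)"

definition contracting_set :: "real \<Rightarrow> 'x::metric_space set \<Rightarrow> bool" where
  "contracting_set C U \<longleftrightarrow> closed U \<and>
     (\<forall>\<gamma> a b. geodesic_seg \<gamma> a b (dist a b) \<longrightarrow>
        setdist (\<gamma> ` {0..dist a b}) U \<ge> C \<longrightarrow>
        (\<forall>p\<in>proj_set U (\<gamma> ` {0..dist a b}). \<forall>q\<in>proj_set U (\<gamma> ` {0..dist a b}). dist p q \<le> C))"

definition isometric_action :: "('g, 'b) monoid_scheme \<Rightarrow> ('g \<Rightarrow> 'x::metric_space \<Rightarrow> 'x) \<Rightarrow> bool" where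
  "isometric_action G act \<longleftrightarrow> group G \<and>
     (\<forall>x. act \<one>\<^bsub>G\<^esub> x = x) \<and>
     (\<forall>g\<in>carrier G. \<forall>h\<in>carrier G. \<forall>x. act (g \<otimes>\<^bsub>G\<^esub> h) x = act g (act h x)) \<and>
     (\<forall>g\<in>carrier G. \<forall>x y. dist (act g x) (act g y) = dist x y)"

definition proper_action :: "('g, 'b) monoid_scheme \<Rightarrow> ('g \<Rightarrow> 'x::metric_space \<Rightarrow> 'x) \<Rightarrow> bool" where
  "proper_action G act \<longleftrightarrow>
     (\<forall>x r. finite {g \<in> carrier G. act g ` cball x r \<inter> cball x r \<noteq> {}})"

definition contracting_elt :: "('g, 'b) monoid_scheme \<Rightarrow> ('g \<Rightarrow> 'x::metric_space \<Rightarrow> 'x) \<Rightarrow> 'x \<Rightarrow> 'g \<Rightarrow> bool" where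
  "contracting_elt G act x0 f \<longleftrightarrow> f \<in> carrier G \<and>
     (\<forall>n::nat. n > 0 \<longrightarrow> f [^]\<^bsub>G\<^esub> n \<noteq> \<one>\<^bsub>G\<^esub>) \<and>
     (\<exists>lam c. lam \<ge> 1 \<and> c \<ge> 0 \<and> (\<forall>m n::int.
        \<bar>m - n\<bar> / lam - c \<le> dist (act (f [^]\<^bsub>G\<^esub> m) x0) (act (f [^]\<^bsub>G\<^esub> n) x0) \<and>
        dist (act (f [^]\<^bsub>G\<^esub> m) x0) (act (f [^]\<^bsub>G\<^esub> n) x0) \<le> lam * \<bar>m - n\<bar> + c)) \<and>
     (\<exists>C. contracting_set C (range (\<lambda>n::int. act (f [^]\<^bsub>G\<^esub> n) x0)))"

definition elem_sub :: "('g, 'b) monoid_scheme \<Rightarrow> 'g \<Rightarrow> 'g set" where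
  "elem_sub G f = {g \<in> carrier G. \<exists>n::nat. n > 0 \<and>
      (g \<otimes>\<^bsub>G\<^esub> (f [^]\<^bsub>G\<^esub> n) \<otimes>\<^bsub>G\<^esub> inv\<^bsub>G\<^esub> g = f [^]\<^bsub>G\<^esub> n \<or>
       g \<otimes>\<^bsub>G\<^esub> (f [^]\<^bsub>G\<^esub> n) \<otimes>\<^bsub>G\<^esub> inv\<^bsub>G\<^esub> g = f [^]\<^bsub>G\<^esub> (- int n))}"

definition axis :: "('g, 'b) monoid_scheme \<Rightarrow> ('g \<Rightarrow> 'x \<Rightarrow> 'x) \<Rightarrow> 'x \<Rightarrow> 'g \<Rightarrow> 'x set" where
  "axis G act x0 f = (\<lambda>g. act g x0) ` elem_sub G f"

text \<open>The subsegment of gamma (of length L) over [s, s + theta L] is a theta-segment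
  when it lies inside [0, L].\<close>
definition theta_seg :: "(real \<Rightarrow> 'x) \<Rightarrow> real \<Rightarrow> real \<Rightarrow> real \<Rightarrow> 'x set" where
  "theta_seg \<gamma> L \<theta> s = \<gamma> ` {s .. s + \<theta> * L}"

definition has_barrier :: "('g, 'b) monoid_scheme \<Rightarrow> ('g \<Rightarrow> 'x::metric_space \<Rightarrow> 'x) \<Rightarrow> 'x \<Rightarrow> real \<Rightarrow> 'g \<Rightarrow> 'x set \<Rightarrow> bool" where
  "has_barrier G act x0 r h \<sigma> \<longleftrightarrow> (\<exists>t\<in>carrier G.
     infdist (act t x0) \<sigma> \<le> r \<and> infdist (act (t \<otimes>\<^bsub>G\<^esub> h) x0) \<sigma> \<le> r)"

definition contains_barrier_seg :: "('g, 'b) monoid_scheme \<Rightarrow> ('g \<Rightarrow> 'x::metric_space \<Rightarrow> 'x) \<Rightarrow> 'x \<Rightarrow> real \<Rightarrow> 'g \<Rightarrow> real \<Rightarrow> (real \<Rightarrow> 'x) \<Rightarrow> real \<Rightarrow> bool" where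
  "contains_barrier_seg G act x0 r h \<theta> \<gamma> L \<longleftrightarrow> (\<exists>s. 0 \<le> s \<and> s + \<theta> * L \<le> L \<and>
     has_barrier G act x0 r h (theta_seg \<gamma> L \<theta> s))"

end

theory Submission
  imports Defs
begin

definition isogeo :: "(real \<Rightarrow> 'x::metric_space) \<Rightarrow> real \<Rightarrow> bool" where
  "isogeo \<gamma> L \<longleftrightarrow> (\<forall>s\<in>{0..L}. \<forall>t\<in>{0..L}. dist (\<gamma> s) (\<gamma> t) = \<bar>s - t\<bar>)"

lemma isogeo_cont: "isogeo \<gamma> L \<Longrightarrow> continuous_on {0..L} \<gamma>"
  unfolding continuous_on_iff isogeo_def
  by (metis dist_real_def)

lemma isogeo_compact: "isogeo \<gamma> L \<Longrightarrow> compact (\<gamma> ` {0..L})"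
  by (intro compact_continuous_image isogeo_cont) auto

lemma isogeo_sub: "isogeo \<gamma> L \<Longrightarrow> 0 \<le> T \<Longrightarrow> T \<le> L \<Longrightarrow> isogeo \<gamma> T"
  unfolding isogeo_def by auto

lemma isogeo_rev: "isogeo \<gamma> L \<Longrightarrow> isogeo (\<lambda>t. \<gamma> (L - t)) L"
  unfolding isogeo_def by (auto simp: abs_minus_commute) 

lemma isogeo_rev_img: "(\<lambda>t. \<gamma> (L - t)) ` {0..L} = \<gamma> ` {0..(L::real)}"
proof
  show "(\<lambda>t. \<gamma> (L - t)) ` {0..L} \<subseteq> \<gamma> ` {0..L}" by auto
  show "\<gamma> ` {0..L} \<subseteq> (\<lambda>t. \<gamma> (L - t)) ` {0..L}"
  proof
    fix x assume "x \<in> \<gamma> ` {0..L}"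
    then obtain s where "s \<in> {0..L}" "x = \<gamma> s" by auto
    then show "x \<in> (\<lambda>t. \<gamma> (L - t)) ` {0..L}"
      by (intro image_eqI[of _ _ "L - s"]) auto
  qed
qed

lemma isogeo_geod: "isogeo \<gamma> L \<Longrightarrow> 0 \<le> L \<Longrightarrow> geodesic_seg \<gamma> (\<gamma> 0) (\<gamma> L) L"
  unfolding isogeo_def geodesic_seg_def by auto

lemma geod_isogeo: "geodesic_seg \<gamma> a b L \<Longrightarrow> isogeo \<gamma> L"
  unfolding isogeo_def geodesic_seg_def by auto

lemma proj_exists:
  assumes "compact U" "U \<noteq> {}"
  obtains P where "P \<in> proj_pt U x"
proof -
  have "continuous_on U (\<lambda>z. dist x z)" by (intro continuous_intros)
  from continuous_attains_inf[OF assms this] obtain P where P: "P \<in> U" "\<And>z. z \<in> U \<Longrightarrow> dist x P \<le> dist x z"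
    by auto
  have "infdist x U = dist x P"
  proof (rule antisym)
    show "infdist x U \<le> dist x P" by (rule infdist_le[OF P(1)])
    show "dist x P \<le> infdist x U" unfolding infdist_notempty[OF assms(2)]
      using P assms(2) by (intro cINF_greatest) auto
  qed
  then show ?thesis using that P unfolding proj_pt_def by auto
qed

lemma isogeo_dist0: "isogeo \<gamma> L \<Longrightarrow> 0 \<le> T \<Longrightarrow> T \<le> L \<Longrightarrow> dist (\<gamma> 0) (\<gamma> T) = T"
  unfolding isogeo_def by auto

lemma contr_apply:
  assumes cs: "contracting_set C U" and U: "U \<noteq> {}"
    and b: "isogeo \<beta> B" "0 \<le> T" "T \<le> B"
    and far: "\<forall>t\<in>{0..T}. C \<le> infdist (\<beta> t) U"
    and P: "P \<in> proj_pt U (\<beta> 0)" and Q: "Q \<in> proj_pt U (\<beta> T)"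
  shows "dist P Q \<le> C"
proof -
  have bT: "isogeo \<beta> T" using isogeo_sub b by blast
  have dT: "dist (\<beta> 0) (\<beta> T) = T" using isogeo_dist0 b by blast
  have g: "geodesic_seg \<beta> (\<beta> 0) (\<beta> T) (dist (\<beta> 0) (\<beta> T))"
    using isogeo_geod[OF bT b(2)] dT by simp
  have sd: "setdist (\<beta> ` {0..dist (\<beta> 0) (\<beta> T)}) U \<ge> C"
    unfolding dT le_setdist_iff
  proof (intro conjI ballI impI)
    fix x y assume "x \<in> \<beta> ` {0..T}" "y \<in> U"
    then obtain t where t: "t \<in> {0..T}" "x = \<beta> t" by auto
    have "C \<le> infdist (\<beta> t) U" using far t by auto
    also have "\<dots> \<le> dist x y" using infdist_le[OF \<open>y \<in> U\<close>] t by simp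
    finally show "C \<le> dist x y" .
  next
    assume "\<beta> ` {0..T} = {} \<or> U = {}"
    then show "C \<le> 0" using U b by auto
  qed
  have "P \<in> proj_set U (\<beta> ` {0..dist (\<beta> 0) (\<beta> T)})"
    unfolding proj_set_def dT using P b by auto
  moreover have "Q \<in> proj_set U (\<beta> ` {0..dist (\<beta> 0) (\<beta> T)})"
    unfolding proj_set_def dT using Q b by auto
  ultimately show ?thesis using cs g sd unfolding contracting_set_def by blast
qed

lemma bgi:
  assumes cs: "contracting_set C U" and U: "compact U" "U \<noteq> {}" and C: "C > 0"
    and b: "isogeo \<beta> B" "0 \<le> B"
    and P: "P \<in> proj_pt U (\<beta> 0)" and Q: "Q \<in> proj_pt U (\<beta> B)" and PQ: "dist P Q > C"
  shows "\<exists>t\<in>{0..B}. dist (\<beta> t) P \<le> 2*C"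
proof -
  define \<phi> where "\<phi> t = infdist (\<beta> t) U" for t
  have lip: "\<phi> s \<le> \<phi> t + \<bar>s - t\<bar>" if "s \<in> {0..B}" "t \<in> {0..B}" for s t
    using infdist_triangle[of "\<beta> s" U "\<beta> t"] b(1) that unfolding \<phi>_def isogeo_def by auto
  define S where "S = {t\<in>{0..B}. \<phi> t \<le> C}"
  show ?thesis
  proof (cases "S = {}")
    case True
    then have "\<forall>t\<in>{0..B}. C \<le> infdist (\<beta> t) U" unfolding S_def \<phi>_def by force
    then have "dist P Q \<le> C" using contr_apply[OF cs U(2) b(1) b(2) order_refl _ P Q] by blast
    then show ?thesis using PQ by simp
  next
    case False
    have bdd: "bdd_below S" unfolding S_def by (rule bdd_belowI[of _ 0]) auto
    define t1 where "t1 = Inf S"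
    have t1ge: "0 \<le> t1" unfolding t1_def using False by (intro cInf_greatest) (auto simp: S_def)
    obtain t0 where t0: "t0 \<in> S" using False by auto
    have t1le: "t1 \<le> B" unfolding t1_def using cInf_lower[OF t0 bdd] t0 by (auto simp: S_def)
    have below: "C < \<phi> t" if "0 \<le> t" "t < t1" for t
    proof (rule ccontr)
      assume "\<not> C < \<phi> t"
      then have "t \<in> S" unfolding S_def using that t1le by auto
      then have "t1 \<le> t" unfolding t1_def using cInf_lower bdd by blast
      then show False using that by simp
    qed
    have le: "\<phi> t1 \<le> C"
    proof (rule field_le_epsilon)
      fix e :: real assume e: "0 < e"
      have "Inf S < t1 + e" using e t1_def by simp
      then obtain t where t: "t \<in> S" "t < t1 + e" using cInf_less_iff[OF False bdd] by blast
      have "t1 \<le> t" unfolding t1_def using cInf_lower[OF t(1) bdd] .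
      have "\<phi> t1 \<le> \<phi> t + \<bar>t1 - t\<bar>" using lip t t1ge t1le unfolding S_def by auto
      then show "\<phi> t1 \<le> C + e" using t \<open>t1 \<le> t\<close> unfolding S_def by auto
    qed
    show ?thesis
    proof (cases "t1 = 0")
      case True
      have "dist (\<beta> 0) P = \<phi> 0" using P unfolding proj_pt_def \<phi>_def by auto
      then show ?thesis using le True C b(2) by (intro bexI[of _ 0]) auto
    next
      case False
      then have t1pos: "0 < t1" using t1ge by simp
      have ge: "C \<le> \<phi> t1"
      proof (rule ccontr)
        assume "\<not> C \<le> \<phi> t1"
        define t where "t = t1 - min t1 ((C - \<phi> t1)/2)"
        have "0 \<le> t" "t < t1" using t1pos \<open>\<not> C \<le> \<phi> t1\<close> unfolding t_def by auto
        have "\<phi> t \<le> \<phi> t1 + \<bar>t - t1\<bar>" using lip[of t t1] \<open>0 \<le> t\<close> \<open>t < t1\<close> t1le t1ge by auto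
        also have "\<dots> < C" using \<open>\<not> C \<le> \<phi> t1\<close> \<open>t < t1\<close> unfolding t_def by (auto simp: min_def field_simps)
        finally show False using below[OF \<open>0 \<le> t\<close> \<open>t < t1\<close>] by simp
      qed
      have far: "\<forall>t\<in>{0..t1}. C \<le> infdist (\<beta> t) U"
      proof
        fix t assume "t \<in> {0..t1}"
        then show "C \<le> infdist (\<beta> t) U" using below[of t] ge unfolding \<phi>_def
          by (cases "t = t1") auto
      qed
      obtain Q1 where Q1: "Q1 \<in> proj_pt U (\<beta> t1)" using proj_exists[OF U] by blast
      have "dist P Q1 \<le> C" using contr_apply[OF cs U(2) b(1) t1ge t1le far P Q1] .
      moreover have "dist (\<beta> t1) Q1 \<le> C" using Q1 le unfolding proj_pt_def \<phi>_def by auto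
      ultimately have "dist (\<beta> t1) P \<le> 2*C" using dist_triangle[of "\<beta> t1" P Q1]
        by (simp add: dist_commute)
      then show ?thesis using t1ge t1le by auto
    qed
  qed
qed

lemma projA:
  assumes gs: "geodesic_space TYPE('x::metric_space)" and cs: "contracting_set C U"
    and U: "compact U" "U \<noteq> {}" and C: "C > 0"
    and P: "P \<in> proj_pt U (x::'x)" and z: "z \<in> U"
  shows "dist x P + dist P z - 4*C \<le> dist x z"
proof -
  obtain \<sigma> where sg: "geodesic_seg \<sigma> x z (dist x z)" using gs unfolding geodesic_space_def by blast
  define L where "L = dist x z"
  have iso: "isogeo \<sigma> L" using geod_isogeo[OF sg] L_def by simp
  have L0: "0 \<le> L" and s0: "\<sigma> 0 = x" and sL: "\<sigma> L = z"
    using sg unfolding L_def geodesic_seg_def by auto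
  have xP: "dist x P = infdist x U" using P unfolding proj_pt_def by auto
  show ?thesis
  proof (cases "dist P z \<le> C")
    case True
    have "dist x P \<le> dist x z" using xP infdist_le[OF z, of x] by simp
    then show ?thesis using True C by simp
  next
    case False
    have zz: "z \<in> proj_pt U (\<sigma> L)" using z sL unfolding proj_pt_def by simp
    have P0: "P \<in> proj_pt U (\<sigma> 0)" using P s0 by simp
    obtain t where t: "t \<in> {0..L}" "dist (\<sigma> t) P \<le> 2*C"
      using bgi[OF cs U C iso L0 P0 zz] False by auto
    have d1: "dist x (\<sigma> t) = t" using iso t s0 unfolding isogeo_def by auto
    have d2: "dist (\<sigma> t) z = L - t" using iso t sL L0 unfolding isogeo_def by auto
    have "dist x P \<le> dist x (\<sigma> t) + dist (\<sigma> t) P" by (rule dist_triangle)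
    moreover have "dist P z \<le> dist P (\<sigma> t) + dist (\<sigma> t) z" by (rule dist_triangle)
    ultimately show ?thesis using d1 d2 t unfolding L_def by (simp add: dist_commute)
  qed
qed

lemma core0:
  assumes gs: "geodesic_space TYPE('x::metric_space)" and C: "C > 0"
    and g: "isogeo (\<gamma>::real \<Rightarrow> 'x) D" "0 \<le> D" and cs: "contracting_set C (\<gamma> ` {0..D})"
    and a: "isogeo \<alpha> A" "0 \<le> A" and b: "isogeo \<beta> B" "0 \<le> B"
    and e0: "dist (\<alpha> 0) (\<beta> 0) \<le> 2*M" and e1: "dist (\<alpha> A) (\<beta> B) \<le> 2*M"
    and uv: "0 \<le> u" "u \<le> v" "v \<le> A"
    and du: "dist (\<alpha> u) (\<gamma> 0) \<le> r" and dv: "dist (\<alpha> v) (\<gamma> D) \<le> r"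
    and big: "D > 4*r + 8*M + 9*C"
  shows "\<exists>t1\<in>{0..B}. \<exists>t2\<in>{0..B}. dist (\<beta> t1) (\<gamma> 0) \<le> 2*r+4*M+6*C \<and> dist (\<beta> t2) (\<gamma> D) \<le> 2*r+4*M+6*C"
proof -
  define U where "U = \<gamma> ` {0..D}"
  have Uc: "compact U" "U \<noteq> {}" unfolding U_def using isogeo_compact[OF g(1)] g(2) by auto
  have csU: "contracting_set C U" using cs U_def by simp
  obtain P1 where P1: "P1 \<in> proj_pt U (\<beta> 0)" using proj_exists[OF Uc] by blast
  obtain P2 where P2: "P2 \<in> proj_pt U (\<beta> B)" using proj_exists[OF Uc] by blast
  obtain s1 where s1: "s1 \<in> {0..D}" "P1 = \<gamma> s1" using P1 unfolding proj_pt_def U_def by auto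
  obtain s2 where s2: "s2 \<in> {0..D}" "P2 = \<gamma> s2" using P2 unfolding proj_pt_def U_def by auto
  have gd: "dist (\<gamma> x) (\<gamma> y) = \<bar>x - y\<bar>" if "x \<in> {0..D}" "y \<in> {0..D}" for x y
    using g(1) that unfolding isogeo_def by auto
  have ad: "dist (\<alpha> x) (\<alpha> y) = \<bar>x - y\<bar>" if "x \<in> {0..A}" "y \<in> {0..A}" for x y
    using a(1) that unfolding isogeo_def by auto
  have bd: "dist (\<beta> x) (\<beta> y) = \<bar>x - y\<bar>" if "x \<in> {0..B}" "y \<in> {0..B}" for x y
    using b(1) that unfolding isogeo_def by auto
  have f1: "dist P1 (\<gamma> 0) = s1" using gd[of s1 0] s1 g(2) by auto
  have f2: "dist P2 (\<gamma> D) = D - s2" using gd[of s2 D] s2 g(2) by auto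
  have f3: "dist P1 P2 = \<bar>s1 - s2\<bar>" using gd[of s1 s2] s1 s2 by auto
  have f4: "dist (\<gamma> 0) (\<gamma> D) = D" using gd[of 0 D] g(2) by auto
  have g0U: "\<gamma> 0 \<in> U" "\<gamma> D \<in> U" unfolding U_def using g(2) by auto
  have A1: "dist (\<beta> 0) P1 + dist P1 (\<gamma> 0) - 4*C \<le> dist (\<beta> 0) (\<gamma> 0)"
    by (rule projA[OF gs csU Uc C P1 g0U(1)])
  have A2: "dist (\<beta> B) P2 + dist P2 (\<gamma> D) - 4*C \<le> dist (\<beta> B) (\<gamma> D)"
    by (rule projA[OF gs csU Uc C P2 g0U(2)])
  have au: "dist (\<alpha> 0) (\<alpha> u) = u" using ad[of 0 u] uv by auto
  have auv: "dist (\<alpha> u) (\<alpha> v) = v - u" using ad[of u v] uv by auto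
  have av: "dist (\<alpha> v) (\<alpha> A) = A - v" using ad[of v A] uv by auto
  have aA: "dist (\<alpha> 0) (\<alpha> A) = A" using ad[of 0 A] a by auto
  have bB: "dist (\<beta> 0) (\<beta> B) = B" using bd[of 0 B] b by auto
  have t1: "dist (\<beta> 0) (\<gamma> 0) \<le> 2*M + u + r"
    using dist_triangle[of "\<beta> 0" "\<gamma> 0" "\<alpha> 0"] dist_triangle[of "\<alpha> 0" "\<gamma> 0" "\<alpha> u"] e0 au du
    by (simp add: dist_commute)
  have t2: "D \<le> v - u + 2*r"
    using dist_triangle[of "\<gamma> 0" "\<gamma> D" "\<alpha> u"] dist_triangle[of "\<alpha> u" "\<gamma> D" "\<alpha> v"] f4 du dv auv
    by (simp add: dist_commute)
  have t3: "dist (\<beta> B) (\<gamma> D) \<le> 2*M + (A - v) + r"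
    using dist_triangle[of "\<beta> B" "\<gamma> D" "\<alpha> A"] dist_triangle[of "\<alpha> A" "\<gamma> D" "\<alpha> v"] e1 av dv
    by (simp add: dist_commute)
  have t4: "A \<le> B + 4*M"
    using dist_triangle[of "\<alpha> 0" "\<alpha> A" "\<beta> 0"] dist_triangle[of "\<beta> 0" "\<alpha> A" "\<beta> B"] e0 e1 aA bB
    by (simp add: dist_commute)
  have t5: "B \<le> dist (\<beta> 0) P1 + dist P1 P2 + dist P2 (\<beta> B)"
    using dist_triangle[of "\<beta> 0" "\<beta> B" P1] dist_triangle[of P1 "\<beta> B" P2] bB by simp
  have key: "s1 \<le> 2*r+4*M+4*C \<and> D - s2 \<le> 2*r+4*M+4*C \<and> dist P1 P2 > C"
  proof (cases "s1 \<le> s2")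
    case True
    then show ?thesis using A1 A2 t1 t2 t3 t4 t5 f1 f2 f3 big s1 s2 dist_commute[of P2 "\<beta> B"] by auto
  next
    case False
    then show ?thesis using A1 A2 t1 t2 t3 t4 t5 f1 f2 f3 big s1 s2 dist_commute[of P2 "\<beta> B"] by auto
  qed
  obtain t1 where T1: "t1 \<in> {0..B}" "dist (\<beta> t1) P1 \<le> 2*C"
    using bgi[OF csU Uc C b P1 P2] key by blast
  have P2': "P2 \<in> proj_pt U ((\<lambda>t. \<beta> (B - t)) 0)" using P2 by simp
  have P1': "P1 \<in> proj_pt U ((\<lambda>t. \<beta> (B - t)) B)" using P1 by simp
  obtain t where T: "t \<in> {0..B}" "dist (\<beta> (B - t)) P2 \<le> 2*C"
    using bgi[OF csU Uc C isogeo_rev[OF b(1)] b(2) P2' P1'] key by (auto simp: dist_commute)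
  have r1: "dist (\<beta> t1) (\<gamma> 0) \<le> 2*r+4*M+6*C"
    using dist_triangle[of "\<beta> t1" "\<gamma> 0" P1] T1 f1 key by simp
  have r2: "dist (\<beta> (B - t)) (\<gamma> D) \<le> 2*r+4*M+6*C"
    using dist_triangle[of "\<beta> (B - t)" "\<gamma> D" P2] T f2 key by simp
  show ?thesis using r1 r2 T1 T by (intro bexI[of _ t1] bexI[of _ "B - t"]) auto
qed

lemma core:
  assumes gs: "geodesic_space TYPE('x::metric_space)" and C: "C > 0"
    and g: "isogeo (\<gamma>::real \<Rightarrow> 'x) D" "0 \<le> D" and cs: "contracting_set C (\<gamma> ` {0..D})"
    and a: "isogeo \<alpha> A" "0 \<le> A" and b: "isogeo \<beta> B" "0 \<le> B"
    and e0: "dist (\<alpha> 0) (\<beta> 0) \<le> 2*M" and e1: "dist (\<alpha> A) (\<beta> B) \<le> 2*M"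
    and uv: "u \<in> {0..A}" "v \<in> {0..A}"
    and du: "dist (\<alpha> u) (\<gamma> 0) \<le> r" and dv: "dist (\<alpha> v) (\<gamma> D) \<le> r"
    and big: "D > 4*r + 8*M + 9*C"
  shows "\<exists>t1\<in>{0..B}. \<exists>t2\<in>{0..B}. dist (\<beta> t1) (\<gamma> 0) \<le> 2*r+4*M+6*C \<and> dist (\<beta> t2) (\<gamma> D) \<le> 2*r+4*M+6*C"
proof (cases "u \<le> v")
  case True
  then show ?thesis using core0[OF gs C g cs a b e0 e1 _ True _ du dv big] uv by auto
next
  case False
  have cs': "contracting_set C ((\<lambda>s. \<gamma> (D - s)) ` {0..D})" using cs isogeo_rev_img[of \<gamma> D] by simp
  have "\<exists>t1\<in>{0..B}. \<exists>t2\<in>{0..B}. dist (\<beta> t1) ((\<lambda>s. \<gamma> (D - s)) 0) \<le> 2*r+4*M+6*C \<and> dist (\<beta> t2) ((\<lambda>s. \<gamma> (D - s)) D) \<le> 2*r+4*M+6*C"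
    using core0[OF gs C isogeo_rev[OF g(1)] g(2) cs' a b e0 e1, of v u r] False uv du dv big by auto
  then show ?thesis by auto
qed

lemma seg_choose0:
  assumes b: "isogeo \<beta> B" and th: "0 < \<theta>" "\<theta> \<le> 1" and B0: "0 \<le> B"
    and t: "t1 \<in> {0..B}" "t2 \<in> {0..B}" "t1 \<le> t2" and E: "t2 - t1 \<le> \<theta>*B + E" "0 \<le> E"
    and dp: "dist (\<beta> t1) p \<le> R" and dq: "dist (\<beta> t2) q \<le> R"
  shows "\<exists>s'. 0 \<le> s' \<and> s' + \<theta>*B \<le> B \<and> infdist p (\<beta> ` {s'..s'+\<theta>*B}) \<le> R + E
     \<and> infdist q (\<beta> ` {s'..s'+\<theta>*B}) \<le> R + E"
proof -
  have tB: "\<theta>*B \<le> B" using th B0 by (simp add: mult_left_le_one_le)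
  have tB0: "0 \<le> \<theta>*B" using th B0 by simp
  define s' where "s' = min t1 (B - \<theta>*B)"
  define w where "w = min t2 (s' + \<theta>*B)"
  have s'0: "0 \<le> s'" "s' + \<theta>*B \<le> B" using t tB unfolding s'_def by auto
  have in1: "t1 \<in> {s'..s'+\<theta>*B}" using t tB0 unfolding s'_def by auto
  have in2: "w \<in> {s'..s'+\<theta>*B}" using t tB0 unfolding s'_def w_def by auto
  have wle: "t2 - w \<le> E" "w \<le> t2" using t E unfolding w_def s'_def by auto
  have w0: "w \<in> {0..B}" using in2 s'0 by auto
  have dw: "dist (\<beta> t2) (\<beta> w) = t2 - w" using b t(2) w0 wle unfolding isogeo_def by auto
  have "infdist p (\<beta> ` {s'..s'+\<theta>*B}) \<le> dist p (\<beta> t1)" using in1 by (intro infdist_le) auto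
  moreover have "infdist q (\<beta> ` {s'..s'+\<theta>*B}) \<le> dist q (\<beta> w)" using in2 by (intro infdist_le) auto
  moreover have "dist q (\<beta> w) \<le> dist q (\<beta> t2) + dist (\<beta> t2) (\<beta> w)" by (rule dist_triangle)
  ultimately show ?thesis using s'0 dp dq dw wle E by (intro exI[of _ s']) (auto simp: dist_commute)
qed

lemma seg_choose:
  assumes b: "isogeo \<beta> B" and th: "0 < \<theta>" "\<theta> \<le> 1" and B0: "0 \<le> B"
    and t: "t1 \<in> {0..B}" "t2 \<in> {0..B}" and E: "\<bar>t2 - t1\<bar> \<le> \<theta>*B + E" "0 \<le> E"
    and dp: "dist (\<beta> t1) p \<le> R" and dq: "dist (\<beta> t2) q \<le> R"
  shows "\<exists>s'. 0 \<le> s' \<and> s' + \<theta>*B \<le> B \<and> infdist p (\<beta> ` {s'..s'+\<theta>*B}) \<le> R + E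
     \<and> infdist q (\<beta> ` {s'..s'+\<theta>*B}) \<le> R + E"
proof (cases "t1 \<le> t2")
  case True
  then show ?thesis using seg_choose0[OF b th B0 t True _ E(2) dp dq] E by auto
next
  case False
  then show ?thesis using seg_choose0[OF b th B0 t(2) t(1) _ _ E(2) dq dp] E by auto
qed

lemma act_facts:
  assumes ia: "isometric_action G act" and t: "t \<in> carrier G"
  shows "act t (act (inv\<^bsub>G\<^esub> t) y) = y" "act (inv\<^bsub>G\<^esub> t) (act t y) = y"
    "dist (act t x) (act t y) = dist x y" "dist (act (inv\<^bsub>G\<^esub> t) x) (act (inv\<^bsub>G\<^esub> t) y) = dist x y"
proof -
  have grp: "group G" using ia unfolding isometric_action_def by simp
  have it: "inv\<^bsub>G\<^esub> t \<in> carrier G" using group.inv_closed[OF grp t] .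
  have comp: "\<And>g h x. g \<in> carrier G \<Longrightarrow> h \<in> carrier G \<Longrightarrow> act (g \<otimes>\<^bsub>G\<^esub> h) x = act g (act h x)"
    and one: "\<And>x. act \<one>\<^bsub>G\<^esub> x = x"
    and iso: "\<And>g x y. g \<in> carrier G \<Longrightarrow> dist (act g x) (act g y) = dist x y"
    using ia unfolding isometric_action_def by auto
  show "act t (act (inv\<^bsub>G\<^esub> t) y) = y"
    using comp[OF t it, of y] group.r_inv[OF grp t] one by simp
  show "act (inv\<^bsub>G\<^esub> t) (act t y) = y"
    using comp[OF it t, of y] group.l_inv[OF grp t] one by simp
  show "dist (act t x) (act t y) = dist x y" using iso t by simp
  show "dist (act (inv\<^bsub>G\<^esub> t) x) (act (inv\<^bsub>G\<^esub> t) y) = dist x y" using iso it by simp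
qed

lemma one_elem_sub:
  assumes grp: "group G" and f: "f \<in> carrier G"
  shows "\<one>\<^bsub>G\<^esub> \<in> elem_sub G f"
proof -
  have "\<one>\<^bsub>G\<^esub> \<otimes>\<^bsub>G\<^esub> (f [^]\<^bsub>G\<^esub> (1::nat)) \<otimes>\<^bsub>G\<^esub> inv\<^bsub>G\<^esub> \<one>\<^bsub>G\<^esub> = f [^]\<^bsub>G\<^esub> (1::nat)"
    using grp f by (simp add: group.is_monoid monoid.nat_pow_closed monoid.inv_one monoid.r_one monoid.l_one)
  then show ?thesis unfolding elem_sub_def using grp f
    by (auto intro!: exI[of _ "1::nat"] simp: group.is_monoid monoid.one_closed)
qed

theorem lemma4p3:
  fixes G :: "('g, 'b) monoid_scheme" and act :: "'g \<Rightarrow> 'x::metric_space \<Rightarrow> 'x"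
    and x0 :: 'x and f :: 'g and C :: real
  assumes "proper_metric TYPE('x)" and "geodesic_space TYPE('x)"
    and "isometric_action G act" and "proper_action G act"
    and "contracting_elt G act x0 f"
    and "C > 0"
    and "\<forall>\<gamma> a b. a \<in> axis G act x0 f \<longrightarrow> b \<in> axis G act x0 f \<longrightarrow>
            geodesic_seg \<gamma> a b (dist a b) \<longrightarrow> contracting_set C (\<gamma> ` {0..dist a b})"
  shows "\<forall>M>0. \<exists>L1>0. \<forall>r>0. \<exists>r'.
     \<forall>h g \<theta> \<alpha> a1 b1 \<beta> a2 b2.
       h \<in> elem_sub G f \<longrightarrow> dist x0 (act h x0) > L1 \<longrightarrow> g \<in> carrier G \<longrightarrow>
       \<theta> \<in> {0<..1} \<longrightarrow>
       a1 \<in> cball x0 M \<longrightarrow> b1 \<in> cball (act g x0) M \<longrightarrow> geodesic_seg \<alpha> a1 b1 (dist a1 b1) \<longrightarrow>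
       a2 \<in> cball x0 M \<longrightarrow> b2 \<in> cball (act g x0) M \<longrightarrow> geodesic_seg \<beta> a2 b2 (dist a2 b2) \<longrightarrow>
       contains_barrier_seg G act x0 r h \<theta> \<alpha> (dist a1 b1) \<longrightarrow>
       contains_barrier_seg G act x0 r' h \<theta> \<beta> (dist a2 b2)"
proof (intro allI impI)
  fix M :: real assume M: "M > 0"
  note gs = assms(2) and ia = assms(3) and C = assms(6) and ax = assms(7)
  have grp: "group G" using ia unfolding isometric_action_def by simp
  have fG: "f \<in> carrier G" using assms(5) unfolding contracting_elt_def by simp
  have one: "\<And>x. act \<one>\<^bsub>G\<^esub> x = x" using ia unfolding isometric_action_def by simp
  have comp: "\<And>g h x. g \<in> carrier G \<Longrightarrow> h \<in> carrier G \<Longrightarrow> act (g \<otimes>\<^bsub>G\<^esub> h) x = act g (act h x)"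
    using ia unfolding isometric_action_def by auto
  show "\<exists>L1>0. \<forall>r>0. \<exists>r'.
     \<forall>h g \<theta> \<alpha> a1 b1 \<beta> a2 b2.
       h \<in> elem_sub G f \<longrightarrow> dist x0 (act h x0) > L1 \<longrightarrow> g \<in> carrier G \<longrightarrow>
       \<theta> \<in> {0<..1} \<longrightarrow>
       a1 \<in> cball x0 M \<longrightarrow> b1 \<in> cball (act g x0) M \<longrightarrow> geodesic_seg \<alpha> a1 b1 (dist a1 b1) \<longrightarrow>
       a2 \<in> cball x0 M \<longrightarrow> b2 \<in> cball (act g x0) M \<longrightarrow> geodesic_seg \<beta> a2 b2 (dist a2 b2) \<longrightarrow>
       contains_barrier_seg G act x0 r h \<theta> \<alpha> (dist a1 b1) \<longrightarrow>
       contains_barrier_seg G act x0 r' h \<theta> \<beta> (dist a2 b2)"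
  proof (rule exI[of _ "1::real"], intro conjI allI impI)
    show "(0::real) < 1" by simp
    fix r :: real assume r: "r > 0"
    show "\<exists>r'. \<forall>h g \<theta> \<alpha> a1 b1 \<beta> a2 b2.
       h \<in> elem_sub G f \<longrightarrow> dist x0 (act h x0) > 1 \<longrightarrow> g \<in> carrier G \<longrightarrow>
       \<theta> \<in> {0<..1} \<longrightarrow>
       a1 \<in> cball x0 M \<longrightarrow> b1 \<in> cball (act g x0) M \<longrightarrow> geodesic_seg \<alpha> a1 b1 (dist a1 b1) \<longrightarrow>
       a2 \<in> cball x0 M \<longrightarrow> b2 \<in> cball (act g x0) M \<longrightarrow> geodesic_seg \<beta> a2 b2 (dist a2 b2) \<longrightarrow>
       contains_barrier_seg G act x0 r h \<theta> \<alpha> (dist a1 b1) \<longrightarrow>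
       contains_barrier_seg G act x0 r' h \<theta> \<beta> (dist a2 b2)"
    proof (intro exI[of _ "20*r+30*M+30*C"] allI impI)
      fix h g \<theta> \<alpha> a1 b1 \<beta> a2 b2
      assume h: "h \<in> elem_sub G f" and "dist x0 (act h x0) > 1" and g: "g \<in> carrier G"
        and th: "\<theta> \<in> {0<..1}"
        and a1: "a1 \<in> cball x0 M" and b1: "b1 \<in> cball (act g x0) M"
        and ga: "geodesic_seg \<alpha> a1 b1 (dist a1 b1)"
        and a2: "a2 \<in> cball x0 M" and b2: "b2 \<in> cball (act g x0) M"
        and gb: "geodesic_seg \<beta> a2 b2 (dist a2 b2)"
        and bar: "contains_barrier_seg G act x0 r h \<theta> \<alpha> (dist a1 b1)"
      define A where "A = dist a1 b1"
      define B where "B = dist a2 b2"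
      have hG: "h \<in> carrier G" using h unfolding elem_sub_def by simp
      have isa: "isogeo \<alpha> A" using geod_isogeo[OF ga] A_def by simp
      have isb: "isogeo \<beta> B" using geod_isogeo[OF gb] B_def by simp
      have A0: "0 \<le> A" and B0: "0 \<le> B" unfolding A_def B_def by auto
      have \<alpha>0: "\<alpha> 0 = a1" "\<alpha> A = b1" using ga unfolding A_def geodesic_seg_def by auto
      have \<beta>0: "\<beta> 0 = a2" "\<beta> B = b2" using gb unfolding B_def geodesic_seg_def by auto
      have th0: "0 < \<theta>" "\<theta> \<le> 1" using th by auto
      have tB: "\<theta>*B \<le> B" using th0 B0 by (simp add: mult_left_le_one_le)
      have e0: "dist (\<alpha> 0) (\<beta> 0) \<le> 2*M"
        using \<alpha>0 \<beta>0 a1 a2 dist_triangle[of a1 a2 x0] by (simp add: dist_commute)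
      have e1: "dist (\<alpha> A) (\<beta> B) \<le> 2*M"
        using \<alpha>0 \<beta>0 b1 b2 dist_triangle[of b1 b2 "act g x0"] by (simp add: dist_commute)
      have AB: "A \<le> B + 4*M"
        using e0 e1 dist_triangle[of "\<alpha> 0" "\<alpha> A" "\<beta> 0"] dist_triangle[of "\<beta> 0" "\<alpha> A" "\<beta> B"] \<alpha>0 \<beta>0
        unfolding A_def B_def by (simp add: dist_commute)
      obtain s t where s: "0 \<le> s" "s + \<theta>*A \<le> A" and tG: "t \<in> carrier G"
        and bp: "infdist (act t x0) (\<alpha> ` {s..s+\<theta>*A}) \<le> r"
        and bq: "infdist (act (t \<otimes>\<^bsub>G\<^esub> h) x0) (\<alpha> ` {s..s+\<theta>*A}) \<le> r"
        using bar unfolding contains_barrier_seg_def has_barrier_def theta_seg_def A_def by blast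
      have sub: "{s..s+\<theta>*A} \<subseteq> {0..A}" using s by auto
      have segc: "compact (\<alpha> ` {s..s+\<theta>*A})"
        by (intro compact_continuous_image continuous_on_subset[OF isogeo_cont[OF isa] sub]) auto
      have segne: "\<alpha> ` {s..s+\<theta>*A} \<noteq> {}" using th0 A0 by auto
      define p where "p = act t x0"
      define q where "q = act t (act h x0)"
      have q_def': "act (t \<otimes>\<^bsub>G\<^esub> h) x0 = q" unfolding q_def using comp[OF tG hG] by simp
      obtain P where P: "P \<in> proj_pt (\<alpha> ` {s..s+\<theta>*A}) p" using proj_exists[OF segc segne] by blast
      obtain Q where Q: "Q \<in> proj_pt (\<alpha> ` {s..s+\<theta>*A}) q" using proj_exists[OF segc segne] by blast
      obtain u where u: "u \<in> {s..s+\<theta>*A}" "dist p (\<alpha> u) \<le> r"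
        using P bp unfolding proj_pt_def p_def by auto
      obtain v where v: "v \<in> {s..s+\<theta>*A}" "dist q (\<alpha> v) \<le> r"
        using Q bq q_def' unfolding proj_pt_def by auto
      define D where "D = dist x0 (act h x0)"
      have Dpq: "dist p q = D" unfolding p_def q_def D_def using act_facts(3)[OF ia tG] by simp
      have r'0: "0 \<le> 20*r+30*M+30*C" using r M C by simp
      show "contains_barrier_seg G act x0 (20*r+30*M+30*C) h \<theta> \<beta> (dist a2 b2)"
      proof (cases "D \<le> 4*r + 8*M + 9*C")
        case True
        have oneG: "\<one>\<^bsub>G\<^esub> \<in> carrier G" using grp by (simp add: group.is_monoid monoid.one_closed)
        have oh: "act (\<one>\<^bsub>G\<^esub> \<otimes>\<^bsub>G\<^esub> h) x0 = act h x0" using grp hG by (simp add: group.is_monoid monoid.l_one)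
        have in0: "\<beta> 0 \<in> \<beta> ` {0..0+\<theta>*B}" using th0 B0 by auto
        have i1: "infdist x0 (\<beta> ` {0..0+\<theta>*B}) \<le> dist x0 a2" using infdist_le[OF in0] \<beta>0 by simp
        have i2: "infdist (act h x0) (\<beta> ` {0..0+\<theta>*B}) \<le> dist (act h x0) a2" using infdist_le[OF in0] \<beta>0 by simp
        have "dist (act h x0) a2 \<le> D + M" using dist_triangle[of "act h x0" a2 x0] a2 unfolding D_def
          by (simp add: dist_commute)
        then show ?thesis unfolding contains_barrier_seg_def has_barrier_def theta_seg_def B_def[symmetric]
          using i1 i2 a2 True tB B0 r M C oneG oh one
          by (intro exI[of _ 0] conjI bexI[of _ "\<one>\<^bsub>G\<^esub>"]) (auto simp: dist_commute)
      next
        case False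
        then have big: "D > 4*r + 8*M + 9*C" by simp
        have x0ax: "x0 \<in> axis G act x0 f" unfolding axis_def using one_elem_sub[OF grp fG] one[of x0] by (intro image_eqI[of _ _ "\<one>\<^bsub>G\<^esub>"]) auto
        have hax: "act h x0 \<in> axis G act x0 f" unfolding axis_def using h by blast
        obtain \<sigma> where sg: "geodesic_seg \<sigma> x0 (act h x0) D"
          using gs unfolding geodesic_space_def D_def by blast
        have cs: "contracting_set C (\<sigma> ` {0..D})" using ax x0ax hax sg unfolding D_def by blast
        have iss: "isogeo \<sigma> D" using geod_isogeo[OF sg] .
        have D0: "0 \<le> D" and \<sigma>0: "\<sigma> 0 = x0" "\<sigma> D = act h x0" using sg unfolding geodesic_seg_def by auto
        define it where "it = inv\<^bsub>G\<^esub> t"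
        define \<alpha>' where "\<alpha>' = (\<lambda>x. act it (\<alpha> x))"
        define \<beta>' where "\<beta>' = (\<lambda>x. act it (\<beta> x))"
        have dI: "\<And>x y. dist (act it x) (act it y) = dist x y" unfolding it_def using act_facts(4)[OF ia tG] by simp
        have cI: "\<And>y. act it (act t y) = y" unfolding it_def using act_facts(2)[OF ia tG] by simp
        have isa': "isogeo \<alpha>' A" using isa dI unfolding isogeo_def \<alpha>'_def by simp
        have isb': "isogeo \<beta>' B" using isb dI unfolding isogeo_def \<beta>'_def by simp
        have e0': "dist (\<alpha>' 0) (\<beta>' 0) \<le> 2*M" using e0 dI unfolding \<alpha>'_def \<beta>'_def by simp
        have e1': "dist (\<alpha>' A) (\<beta>' B) \<le> 2*M" using e1 dI unfolding \<alpha>'_def \<beta>'_def by simp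
        have du: "dist (\<alpha>' u) (\<sigma> 0) \<le> r"
          using u dI[of "\<alpha> u" p] cI[of x0] \<sigma>0 unfolding \<alpha>'_def p_def by (simp add: dist_commute)
        have dv: "dist (\<alpha>' v) (\<sigma> D) \<le> r"
          using v dI[of "\<alpha> v" q] cI[of "act h x0"] \<sigma>0 unfolding \<alpha>'_def q_def by (simp add: dist_commute)
        have uA: "u \<in> {0..A}" "v \<in> {0..A}" using u v sub by auto
        obtain t1 t2 where T: "t1 \<in> {0..B}" "t2 \<in> {0..B}"
          "dist (\<beta>' t1) (\<sigma> 0) \<le> 2*r+4*M+6*C" "dist (\<beta>' t2) (\<sigma> D) \<le> 2*r+4*M+6*C"
          using core[OF gs C iss D0 cs isa' A0 isb' B0 e0' e1' uA du dv big] by blast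
        have T1: "dist (\<beta> t1) p \<le> 2*r+4*M+6*C"
          using T(3) dI[of "\<beta> t1" p] cI[of x0] \<sigma>0 unfolding \<beta>'_def p_def by simp
        have T2: "dist (\<beta> t2) q \<le> 2*r+4*M+6*C"
          using T(4) dI[of "\<beta> t2" q] cI[of "act h x0"] \<sigma>0 unfolding \<beta>'_def q_def by simp
        have duv: "dist (\<alpha> u) (\<alpha> v) = \<bar>u - v\<bar>" using isa uA unfolding isogeo_def by auto
        have "D \<le> dist p (\<alpha> u) + dist (\<alpha> u) (\<alpha> v) + dist (\<alpha> v) q"
          using Dpq dist_triangle[of p q "\<alpha> u"] dist_triangle[of "\<alpha> u" q "\<alpha> v"] by simp
        then have Dle: "D \<le> \<bar>u - v\<bar> + 2*r" using u v duv by (simp add: dist_commute)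
        have uvA: "\<bar>u - v\<bar> \<le> \<theta>*A" using u v by auto
        have "\<theta>*A \<le> \<theta>*(B + 4*M)" using AB th0 by (simp add: mult_left_mono)
        also have "\<dots> \<le> \<theta>*B + 4*M" using th0 M by (simp add: distrib_left mult_left_le_one_le)
        finally have thA: "\<theta>*A \<le> \<theta>*B + 4*M" .
        have dbt: "dist (\<beta> t1) (\<beta> t2) = \<bar>t2 - t1\<bar>" using isb T unfolding isogeo_def by (auto simp: abs_minus_commute)
        have "dist (\<beta> t1) (\<beta> t2) \<le> dist (\<beta> t1) p + dist p q + dist q (\<beta> t2)"
          using dist_triangle[of "\<beta> t1" "\<beta> t2" p] dist_triangle[of p "\<beta> t2" q] by simp
        then have Eb: "\<bar>t2 - t1\<bar> \<le> \<theta>*B + (2*(2*r+4*M+6*C) + 2*r + 4*M)"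
          using dbt T1 T2 Dpq Dle uvA thA by (simp add: dist_commute)
        obtain s' where s': "0 \<le> s'" "s' + \<theta>*B \<le> B"
          "infdist p (\<beta> ` {s'..s'+\<theta>*B}) \<le> (2*r+4*M+6*C) + (2*(2*r+4*M+6*C) + 2*r + 4*M)"
          "infdist q (\<beta> ` {s'..s'+\<theta>*B}) \<le> (2*r+4*M+6*C) + (2*(2*r+4*M+6*C) + 2*r + 4*M)"
          using seg_choose[OF isb th0 B0 T(1) T(2) Eb _ T1 T2] r M C by auto
        show ?thesis unfolding contains_barrier_seg_def has_barrier_def theta_seg_def B_def[symmetric]
          using s' tG q_def' r M C unfolding p_def
          by (intro exI[of _ s'] conjI bexI[of _ t]) auto
      qed
    qed
  qed
qed

end
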